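(* The inclusion $\mathrm{CDUS}(\Pi)\subseteq\mathrm{PF}(\Pi)$ does not hold in general: there exists a (finite) family of policies $\Pi$ such that $\mathrm{CDUS}(\Pi)\not\subseteq\mathrm{PF}(\Pi)$.
   Context: A family of policies $\Pi=\{\pi_1,\pi_2,\dots\}$ of a multi-objective decision problem with $d$ objectives is given, each $\pi$ having a random return vector $\mathbf{Z}^\pi\in\mathbb{R}^d$ with finite mean $\mathbf{V}^\pi=\mathbb{E}[\mathbf{Z}^\pi]$; the return distributions of the policies may be arbitrary (e.g. finitely supported). For $\mathbf{x},\mathbf{y}\in\mathbb{R}^d$: $\mathbf{y}\preceq_p\mathbf{x}$ iff $y_i\le x_i$ for all $i$; $\mathbf{x}\succ_p\mathbf{y}$ iff $x_i\ge y_i$ for all $i$ and $x_i>y_i$ for some $i$. CDF: $F_{\mathbf{X}}(\mathbf{x})=P(\mathbf{X}\preceq_p\mathbf{x})$; $\mathbf{X}\succeq_{\mathrm{FSD}}\mathbf{Y}$ iff $F_{\mathbf{X}}\le F_{\mathbf{Y}}$ pointwise, $\succ_{\mathrm{FSD}}$ additionally requiring strict inequality somewhere; $\mathbf{X}\succ_d\mathbf{Y}$ iff $\mathbf{X}\succeq_{\mathrm{FSD}}\mathbf{Y}$ and $X_j\succ_{\mathrm{FSD}}Y_j$ for some marginal $j$. For weights $\lambda\in\Delta^{|\Pi|}$ (probability vectors), $\sum_i\lambda_i\mathbf{Z}^{\pi_i}$ is the mixture distribution with CDF $\sum_i\lambda_iF_{\mathbf{Z}^{\pi_i}}$. $\mathrm{PF}(\Pi)=\{\pi\in\Pi:\nexists\pi'\in\Pi,\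 \mathbf{V}^{\pi'}\succ_p\mathbf{V}^\pi\}$; $\mathrm{CDUS}(\Pi)=\{\pi\in\Pi:\nexists\lambda\in\Delta^{|\Pi|},\ \sum_i\lambda_i\mathbf{Z}^{\pi_i}\succ_d\mathbf{Z}^\pi\}$. *)

theory Defs
  imports "HOL-Probability.Probability"
begin

text \<open>Return vectors in R^d are represented as functions nat => real, of which only the
coordinates i < d are relevant. A policy family Pi = {pi_0, ..., pi_(n-1)} is given by
n return distributions Z 0, ..., Z (n-1), each a discrete probability distribution (pmf).\<close>

definition pareto_le :: "nat \<Rightarrow> (nat \<Rightarrow> real) \<Rightarrow> (nat \<Rightarrow> real) \<Rightarrow> bool" where
  "pareto_le d y x \<longleftrightarrow> (\<forall>i<d. y i \<le> x i)"

definition pareto_gt :: "nat \<Rightarrow> (nat \<Rightarrow> real) \<Rightarrow> (nat \<Rightarrow> real) \<Rightarrow> bool" where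
  "pareto_gt d x y \<longleftrightarrow> (\<forall>i<d. x i \<ge> y i) \<and> (\<exists>i<d. x i > y i)"

definition mcdf :: "nat \<Rightarrow> (nat \<Rightarrow> real) pmf \<Rightarrow> (nat \<Rightarrow> real) \<Rightarrow> real" where
  "mcdf d p x = measure_pmf.prob p {z. pareto_le d z x}"

definition marg_cdf :: "(nat \<Rightarrow> real) pmf \<Rightarrow> nat \<Rightarrow> real \<Rightarrow> real" where
  "marg_cdf p j t = measure_pmf.prob p {z. z j \<le> t}"

definition mean_vec :: "(nat \<Rightarrow> real) pmf \<Rightarrow> (nat \<Rightarrow> real)" where
  "mean_vec p = (\<lambda>i. measure_pmf.expectation p (\<lambda>z. z i))"

text \<open>First-order stochastic dominance, phrased on CDFs: X \<succeq>_FSD Y iff F_X \<le> F_Y.\<close>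
definition fsd_ge :: "('a \<Rightarrow> real) \<Rightarrow> ('a \<Rightarrow> real) \<Rightarrow> bool" where
  "fsd_ge FX FY \<longleftrightarrow> (\<forall>x. FX x \<le> FY x)"

definition fsd_gt :: "('a \<Rightarrow> real) \<Rightarrow> ('a \<Rightarrow> real) \<Rightarrow> bool" where
  "fsd_gt FX FY \<longleftrightarrow> fsd_ge FX FY \<and> (\<exists>x. FX x < FY x)"

definition dist_dom :: "nat \<Rightarrow> ((nat \<Rightarrow> real) \<Rightarrow> real) \<Rightarrow> (nat \<Rightarrow> real \<Rightarrow> real)
    \<Rightarrow> ((nat \<Rightarrow> real) \<Rightarrow> real) \<Rightarrow> (nat \<Rightarrow> real \<Rightarrow> real) \<Rightarrow> bool" where
  "dist_dom d FX MX FY MY \<longleftrightarrow> fsd_ge FX FY \<and> (\<exists>j<d. fsd_gt (MX j) (MY j))"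

definition prob_simplex :: "nat \<Rightarrow> (nat \<Rightarrow> real) set" where
  "prob_simplex n = {lam. (\<forall>i<n. 0 \<le> lam i) \<and> (\<Sum>i<n. lam i) = 1}"

text \<open>Mixture sum_i lam_i Z^(pi_i): its joint CDF and marginal CDFs are the lam-weighted sums.\<close>
definition mix_cdf :: "nat \<Rightarrow> nat \<Rightarrow> (nat \<Rightarrow> (nat \<Rightarrow> real) pmf) \<Rightarrow> (nat \<Rightarrow> real)
    \<Rightarrow> (nat \<Rightarrow> real) \<Rightarrow> real" where
  "mix_cdf d n Z lam x = (\<Sum>i<n. lam i * mcdf d (Z i) x)"

definition mix_marg :: "nat \<Rightarrow> (nat \<Rightarrow> (nat \<Rightarrow> real) pmf) \<Rightarrow> (nat \<Rightarrow> real)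
    \<Rightarrow> nat \<Rightarrow> real \<Rightarrow> real" where
  "mix_marg n Z lam j t = (\<Sum>i<n. lam i * marg_cdf (Z i) j t)"

definition PF :: "nat \<Rightarrow> nat \<Rightarrow> (nat \<Rightarrow> (nat \<Rightarrow> real) pmf) \<Rightarrow> nat set" where
  "PF d n Z = {k. k < n \<and> \<not> (\<exists>k'<n. pareto_gt d (mean_vec (Z k')) (mean_vec (Z k)))}"

definition CDUS :: "nat \<Rightarrow> nat \<Rightarrow> (nat \<Rightarrow> (nat \<Rightarrow> real) pmf) \<Rightarrow> nat set" where
  "CDUS d n Z = {k. k < n \<and> \<not> (\<exists>lam\<in>prob_simplex n.
       dist_dom d (mix_cdf d n Z lam) (mix_marg n Z lam) (mcdf d (Z k)) (marg_cdf (Z k)))}"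

end

theory Submission
  imports Defs
begin

definition Za :: "nat \<Rightarrow> (nat \<Rightarrow> real) pmf" where
  "Za k = (if k = 0 then return_pmf (\<lambda>_. 1) else pmf_of_set {(\<lambda>_. 0), (\<lambda>_. 10)})"

lemma distinct_fun: "(\<lambda>_::nat. 0::real) \<noteq> (\<lambda>_. 10)"
  by (metis zero_neq_numeral)

lemma card2: "card {(\<lambda>_::nat. 0::real), (\<lambda>_. 10)} = 2"
  using distinct_fun by simp

lemma mean0: "mean_vec (Za 0) 0 = 1"
  by (simp add: mean_vec_def Za_def)

lemma mean1: "mean_vec (Za 1) 0 = 5"
  using distinct_fun card2
  by (simp add: mean_vec_def Za_def integral_pmf_of_set)

lemma notPF: "0 \<notin> PF 1 2 Za"
  unfolding PF_def pareto_gt_def using mean0 mean1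
  by (auto intro!: exI[of _ 1])

lemma mcdf0: "mcdf 1 (Za 0) (\<lambda>_. 0) = 0"
  by (simp add: mcdf_def Za_def pareto_le_def)

lemma mcdf1: "mcdf 1 (Za 1) (\<lambda>_. 0) = 1/2"
proof -
  have "{(\<lambda>_::nat. 0::real), (\<lambda>_. 10)} \<inter> {z. pareto_le 1 z (\<lambda>_. 0)} = {(\<lambda>_. 0)}"
    by (auto simp: pareto_le_def)
  then show ?thesis using distinct_fun card2
    by (simp add: mcdf_def Za_def measure_pmf_of_set)
qed

lemma inCDUS: "0 \<in> CDUS 1 2 Za"
proof -
  have "\<not> dist_dom 1 (mix_cdf 1 2 Za lam) (mix_marg 2 Za lam) (mcdf 1 (Za 0)) (marg_cdf (Za 0))"
    if lam: "lam \<in> prob_simplex 2" for lam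
  proof
    assume dd: "dist_dom 1 (mix_cdf 1 2 Za lam) (mix_marg 2 Za lam) (mcdf 1 (Za 0)) (marg_cdf (Za 0))"
    have l: "lam 0 \<ge> 0" "lam 1 \<ge> 0" "lam 0 + lam 1 = 1"
      using lam by (auto simp: prob_simplex_def numeral_2_eq_2)
    have "mix_cdf 1 2 Za lam (\<lambda>_. 0) \<le> mcdf 1 (Za 0) (\<lambda>_. 0)"
      using dd by (simp add: dist_dom_def fsd_ge_def)
    hence "lam 0 * mcdf 1 (Za 0) (\<lambda>_. 0) + lam 1 * mcdf 1 (Za 1) (\<lambda>_. 0) \<le> mcdf 1 (Za 0) (\<lambda>_. 0)"
      by (simp add: mix_cdf_def numeral_2_eq_2)
    hence "lam 0 * 0 + lam 1 * (1/2) \<le> 0"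
      by (simp only: mcdf0 mcdf1)
    hence "lam 1 = 0" "lam 0 = 1" using l by auto
    hence "mix_marg 2 Za lam 0 = marg_cdf (Za 0) 0"
      by (simp add: mix_marg_def numeral_2_eq_2 fun_eq_iff)
    moreover have "fsd_gt (mix_marg 2 Za lam 0) (marg_cdf (Za 0) 0)"
      using dd by (simp add: dist_dom_def)
    ultimately show False by (simp add: fsd_gt_def)
  qed
  then show ?thesis unfolding CDUS_def by auto
qed

theorem mainTheorem14:
  shows "\<exists>(d::nat) (n::nat) (Z :: nat \<Rightarrow> (nat \<Rightarrow> real) pmf).
           d \<ge> 1 \<and> (\<forall>k<n. finite (set_pmf (Z k))) \<and> \<not> (CDUS d n Z \<subseteq> PF d n Z)"
proof -
  have "\<forall>k<2. finite (set_pmf (Za k))"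
    using distinct_fun by (auto simp: Za_def)
  then show ?thesis using notPF inCDUS
    by (intro exI[of _ 1] exI[of _ 2] exI[of _ Za]) auto
qed

end
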